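(* In the standing setup, let $y\in K$ satisfy $0\le\langle x_{n+1}-y,\,x_n-x_{n+1}\rangle$ for all integers $n\ge1$. Then $y=0$.
   Context: Standing setup. $X$ is a real Hilbert space. $u\colon[0,\infty)\to X$ satisfies $\langle u(s),u(t)\rangle=\exp(-(s-t)^2)$ for all $s,t\ge0$. $(d_n)_{n\ge1}$ satisfies: $d_n>0$, $\sum_k d_k^2<\infty$, $t_n:=\sum_{k=1}^{n-1}d_k\to+\infty$, $d_1\le1/8$, $d_{n+1}\le d_n/(1+64d_n^2)$ for all $n$. $\rho_1:=1$, $\rho_{n+1}:=\rho_n\exp(-d_n^2)$, $x_n:=\rho_nu(t_n)$. $K$ denotes the smallest closed convex cone containing $\{x_n:n\ge1\}$, i.e. the closed convex hull of $\{\lambda x_n:\lambda\ge0,n\ge1\}$. *)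

theory Defs
  imports "HOL-Analysis.Analysis"
begin

text \<open>Sequences are indexed from 1; the value at index 0 is irrelevant.\<close>

definition tseq :: "(nat \<Rightarrow> real) \<Rightarrow> nat \<Rightarrow> real" where
  "tseq d n = (\<Sum>k\<in>{1..<n}. d k)"

fun rhoseq :: "(nat \<Rightarrow> real) \<Rightarrow> nat \<Rightarrow> real" where
  "rhoseq d 0 = 1"
| "rhoseq d (Suc n) = (if n = 0 then 1 else rhoseq d n * exp (- (d n)\<^sup>2))"

definition xseq :: "(real \<Rightarrow> 'a::real_vector) \<Rightarrow> (nat \<Rightarrow> real) \<Rightarrow> nat \<Rightarrow> 'a" where
  "xseq u d n = rhoseq d n *\<^sub>R u (tseq d n)"

definition Kcone :: "(real \<Rightarrow> 'a::real_normed_vector) \<Rightarrow> (nat \<Rightarrow> real) \<Rightarrow> 'a set" where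
  "Kcone u d = closure (convex hull {c *\<^sub>R xseq u d n | c n. c \<ge> 0 \<and> n \<ge> 1})"

end

theory Submission
  imports Defs
begin

lemma tseq_nonneg:
  assumes dpos: "\<And>n. n \<ge> 1 \<Longrightarrow> d n > 0"
  shows "tseq d n \<ge> 0"
  unfolding tseq_def using dpos by (intro sum_nonneg) (auto intro: less_imp_le)

lemma tseq_Suc:
  assumes "n \<ge> 1"
  shows "tseq d (n + 1) = tseq d n + d n"
  unfolding tseq_def using assms by (simp add: sum.atLeastLessThan_Suc)

lemma rhoseq_Suc:
  assumes "n \<ge> 1"
  shows "rhoseq d (n + 1) = rhoseq d n * exp (- (d n)\<^sup>2)"
  using assms by simp

lemma rhoseq_pos: "rhoseq d n > 0"
  by (induction n) auto

lemma rhoseq_le1: "rhoseq d n \<le> 1"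
proof (induction n)
  case 0 then show ?case by simp
next
  case (Suc n)
  have "exp (- (d n)\<^sup>2) \<le> 1" by simp
  moreover have "rhoseq d n > 0" by (rule rhoseq_pos)
  ultimately have "rhoseq d n * exp (- (d n)\<^sup>2) \<le> 1 * 1"
    using Suc by (intro mult_mono) auto
  then show ?case by simp
qed

lemma inner_x:
  fixes u :: "real \<Rightarrow> 'a::real_inner"
  assumes u: "\<And>s t. s \<ge> 0 \<Longrightarrow> t \<ge> 0 \<Longrightarrow> inner (u s) (u t) = exp (- (s - t)\<^sup>2)"
    and dpos: "\<And>n. n \<ge> 1 \<Longrightarrow> d n > 0"
  shows "inner (xseq u d m) (xseq u d n) = rhoseq d m * rhoseq d n * exp (- (tseq d m - tseq d n)\<^sup>2)"
  unfolding xseq_def using u[OF tseq_nonneg[OF dpos] tseq_nonneg[OF dpos]]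
  by (simp add: algebra_simps)

theorem lemma6p4:
  fixes u :: "real \<Rightarrow> 'a::{real_inner, complete_space}"
    and d :: "nat \<Rightarrow> real" and y :: 'a
  assumes u: "\<And>s t. s \<ge> 0 \<Longrightarrow> t \<ge> 0 \<Longrightarrow> inner (u s) (u t) = exp (- (s - t)\<^sup>2)"
    and dpos: "\<And>n. n \<ge> 1 \<Longrightarrow> d n > 0"
    and dsum: "summable (\<lambda>k. (d k)\<^sup>2)"
    and tinf: "filterlim (tseq d) at_top sequentially"
    and d1: "d 1 \<le> 1/8"
    and ddec: "\<And>n. n \<ge> 1 \<Longrightarrow> d (n + 1) \<le> d n / (1 + 64 * (d n)\<^sup>2)"
    and yK: "y \<in> Kcone u d"
    and hyp: "\<And>n. n \<ge> 1 \<Longrightarrow>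
       0 \<le> inner (xseq u d (n + 1) - y) (xseq u d n - xseq u d (n + 1))"
  shows "y = 0"
proof -
  define x where "x = xseq u d"
  have ix: "inner (x m) (x n) = rhoseq d m * rhoseq d n * exp (- (tseq d m - tseq d n)\<^sup>2)" for m n
    unfolding x_def by (rule inner_x[OF u dpos])
  have orth: "inner (x (n+1)) (x n - x (n+1)) = 0" if "n \<ge> 1" for n
  proof -
    have "inner (x (n+1)) (x n) = rhoseq d (n+1) * rhoseq d (n+1)"
      unfolding ix rhoseq_Suc[OF that] tseq_Suc[OF that] by (simp add: power2_eq_square)
    moreover have "inner (x (n+1)) (x (n+1)) = rhoseq d (n+1) * rhoseq d (n+1)"
      unfolding ix by simp
    ultimately show ?thesis by (simp add: inner_diff_right)
  qed
  have step1: "inner y (x n) \<le> inner y (x (n+1))" if "n \<ge> 1" for n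
  proof -
    have "0 \<le> inner (x (n + 1) - y) (x n - x (n + 1))" using hyp[OF that] by (simp add: x_def)
    then show ?thesis using orth[OF that] by (simp add: inner_diff_left inner_diff_right)
  qed
  have mono: "inner y (x m) \<le> inner y (x n)" if "1 \<le> m" "m \<le> n" for m n
    using that(2)
  proof (induction n rule: dec_induct)
    case base then show ?case by simp
  next
    case (step k) then show ?case using step1[of k] that(1) by simp
  qed
  have lim0: "(\<lambda>n. inner (x m) (x n)) \<longlonglongrightarrow> 0" for m
  proof -
    have f1: "filterlim (\<lambda>n. tseq d n - tseq d m) at_top sequentially"
      using filterlim_tendsto_add_at_top[OF tendsto_const tinf, of "- tseq d m"] by simp
    have f2: "filterlim (\<lambda>n. (tseq d n - tseq d m)\<^sup>2) at_top sequentially"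
      by (rule filterlim_pow_at_top[OF _ f1]) simp
    have f3: "filterlim (\<lambda>n. -((tseq d n - tseq d m)\<^sup>2)) at_bot sequentially"
      using f2 by (simp add: filterlim_uminus_at_top)
    have f4: "(\<lambda>n. exp (-((tseq d n - tseq d m)\<^sup>2))) \<longlonglongrightarrow> 0"
      by (rule filterlim_compose[OF exp_at_bot f3])
    show ?thesis
    proof (rule Lim_null_comparison[OF _ f4])
      show "\<forall>\<^sub>F n in sequentially. norm (inner (x m) (x n)) \<le> exp (- (tseq d n - tseq d m)\<^sup>2)"
      proof (intro always_eventually allI)
        fix n
        have "norm (inner (x m) (x n)) = rhoseq d m * rhoseq d n * exp (- (tseq d m - tseq d n)\<^sup>2)"
          unfolding ix using rhoseq_pos[of d m] rhoseq_pos[of d n] by simp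
        also have "\<dots> \<le> 1 * 1 * exp (- (tseq d m - tseq d n)\<^sup>2)"
          using rhoseq_pos[of d m] rhoseq_pos[of d n] rhoseq_le1[of d m] rhoseq_le1[of d n]
          by (intro mult_right_mono mult_mono) auto
        also have "\<dots> = exp (- (tseq d n - tseq d m)\<^sup>2)" by (simp add: power2_commute)
        finally show "norm (inner (x m) (x n)) \<le> exp (- (tseq d n - tseq d m)\<^sup>2)" .
      qed
    qed
  qed
  define G where "G = {c *\<^sub>R x n | c n. c \<ge> 0 \<and> n \<ge> 1}"
  have KG: "Kcone u d = closure (convex hull G)" unfolding Kcone_def G_def x_def by simp
  define T where "T = {w. (\<lambda>n. inner w (x n)) \<longlonglongrightarrow> 0}"
  have subT: "subspace T"
    unfolding subspace_def T_def
    by (auto simp: inner_add_left intro: tendsto_add_zero tendsto_mult_right_zero)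
  have GT: "G \<subseteq> T"
  proof
    fix g assume "g \<in> G"
    then obtain c n where g: "g = c *\<^sub>R x n" by (auto simp: G_def)
    show "g \<in> T" unfolding T_def g using tendsto_mult_right_zero[OF lim0[of n], of c] by simp
  qed
  have hullT: "convex hull G \<subseteq> T"
    using convex_hull_subset_span[of G] span_minimal[OF GT subT] by blast
  have neg: "inner y (x m) \<le> 0" if "m \<ge> 1" for m
  proof (rule ccontr)
    assume "\<not> ?thesis"
    then have a: "inner y (x m) > 0" by simp
    define a where "a = inner y (x m)"
    have "y \<in> closure (convex hull G)" using yK KG by simp
    then obtain w where w: "w \<in> convex hull G" "dist w y < a / 2"
      using a unfolding a_def closure_approachable by (metis half_gt_zero)
    have "w \<in> T" using w(1) hullT by blast
    then have "(\<lambda>n. inner w (x n)) \<longlonglongrightarrow> 0" by (simp add: T_def)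
    then have "\<forall>\<^sub>F n in sequentially. norm (inner w (x n)) < a / 2"
      using a a_def by (metis half_gt_zero order_tendstoD(2) tendsto_norm_zero)
    then obtain N where N: "\<And>n. n \<ge> N \<Longrightarrow> norm (inner w (x n)) < a / 2"
      by (auto simp: eventually_sequentially)
    define n where "n = max N m"
    have n: "n \<ge> N" "n \<ge> m" by (auto simp: n_def)
    have nx: "norm (x n) \<le> 1"
    proof -
      have "norm (x n) ^ 2 = inner (x n) (x n)" by (simp add: power2_norm_eq_inner)
      also have "\<dots> = rhoseq d n ^ 2" unfolding ix by (simp add: power2_eq_square)
      also have "\<dots> \<le> 1" using rhoseq_pos[of d n] rhoseq_le1[of d n]
        by (simp add: power_le_one)
      finally show ?thesis by (simp add: power_le_one_iff)
    qed
    have "\<bar>inner (y - w) (x n)\<bar> \<le> norm (y - w) * norm (x n)" by (rule Cauchy_Schwarz_ineq2)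
    also have "\<dots> \<le> norm (y - w)" using nx by (simp add: mult_left_le)
    also have "\<dots> < a / 2" using w(2) by (simp add: dist_norm norm_minus_commute)
    finally have h: "\<bar>inner y (x n) - inner w (x n)\<bar> < a / 2" by (simp add: inner_diff_left)
    then have "inner y (x n) < inner w (x n) + a / 2" by arith
    moreover have "inner w (x n) < a / 2" using N[OF n(1)] by simp
    moreover have "a \<le> inner y (x n)" using mono[OF that n(2)] a_def by simp
    ultimately show False by simp
  qed
  have S: "closure (convex hull G) \<subseteq> {z. inner y z \<le> 0}"
  proof (rule closure_minimal)
    show "convex hull G \<subseteq> {z. inner y z \<le> 0}"
    proof (rule hull_minimal)
      show "G \<subseteq> {z. inner y z \<le> 0}"
        using neg by (auto simp: G_def mult_nonneg_nonpos)
      show "convex {z. inner y z \<le> 0}" by (rule convex_halfspace_le)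
    qed
    show "closed {z. inner y z \<le> 0}" by (rule closed_halfspace_le)
  qed
  then have "inner y y \<le> 0" using yK KG by auto
  then show ?thesis using inner_ge_zero[of y] by (simp add: order_antisym)
qed

end
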